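(* Let $m,n\in\mathbb{Z}\setminus\{0\}$ and let $q$ be an $(m,n)$-phenotype with $q\neq1$ and $q\neq\infty$. Then every transitive $\mathrm{BS}(m,n)$-action of phenotype $q$ on an infinite set fails to be primitive. In particular, no transitive $\mathrm{BS}(m,n)$-action of phenotype $q$ is highly transitive.
   Context: $\mathrm{BS}(m,n)=\langle b,t\mid tb^mt^{-1}=b^n\rangle$; actions are on the right. For a prime $p$, $|k|_p$ is the $p$-adic valuation. For $L\in\mathbb{Z}_{\ge1}$, $\mathrm{Ph}_{m,n}(L)=\prod p^{|L|_p}$ over primes $p$ with $|m|_p=|n|_p$ and $|L|_p>|n|_p$; $\mathrm{Ph}_{m,n}(\infty)=\infty$. The phenotype of a transitive action with stabilizer $\Lambda$ is $\mathrm{Ph}_{m,n}([\langle b\rangle:\langle b\rangle\cap\Lambda])$; an $(m,n)$-phenotype is a value so obtained. An action is primitive if it preserves no equivalence relation other than equality and the full relation; highly transitive means $d$-transitive (on $d$-tuples of distinct points) for all $d$. *)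

theory Defs
  imports Main "HOL-Computational_Algebra.Primes" "HOL-Library.Extended_Nat"
begin

definition zpw :: "'a set \<Rightarrow> ('a \<Rightarrow> 'a) \<Rightarrow> int \<Rightarrow> 'a \<Rightarrow> 'a" where
  "zpw X f k = (if k \<ge> 0 then f ^^ nat k else (inv_into X f) ^^ nat (- k))"

text \<open>A right action of BS(m,n) = < b, t | t b^m t^-1 = b^n > on X, given by the
  actions beta of b and tau of t: x.b = beta x, x.t = tau x.
  The relation reads  ((x.t).b^m).t^-1 = x.b^n.\<close>
definition BS_action :: "int \<Rightarrow> int \<Rightarrow> 'a set \<Rightarrow> ('a \<Rightarrow> 'a) \<Rightarrow> ('a \<Rightarrow> 'a) \<Rightarrow> bool" where
  "BS_action m n X \<beta> \<tau> \<longleftrightarrow> bij_betw \<beta> X X \<and> bij_betw \<tau> X X \<and>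
     (\<forall>x\<in>X. inv_into X \<tau> (zpw X \<beta> m (\<tau> x)) = zpw X \<beta> n x)"

inductive_set gmaps :: "'a set \<Rightarrow> ('a \<Rightarrow> 'a) \<Rightarrow> ('a \<Rightarrow> 'a) \<Rightarrow> ('a \<Rightarrow> 'a) set"
  for X :: "'a set" and \<beta> :: "'a \<Rightarrow> 'a" and \<tau> :: "'a \<Rightarrow> 'a" where
  gm_id: "id \<in> gmaps X \<beta> \<tau>"
| gm_b: "g \<in> gmaps X \<beta> \<tau> \<Longrightarrow> \<beta> \<circ> g \<in> gmaps X \<beta> \<tau>"
| gm_t: "g \<in> gmaps X \<beta> \<tau> \<Longrightarrow> \<tau> \<circ> g \<in> gmaps X \<beta> \<tau>"
| gm_bi: "g \<in> gmaps X \<beta> \<tau> \<Longrightarrow> inv_into X \<beta> \<circ> g \<in> gmaps X \<beta> \<tau>"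
| gm_ti: "g \<in> gmaps X \<beta> \<tau> \<Longrightarrow> inv_into X \<tau> \<circ> g \<in> gmaps X \<beta> \<tau>"

definition transitive_action :: "'a set \<Rightarrow> ('a \<Rightarrow> 'a) \<Rightarrow> ('a \<Rightarrow> 'a) \<Rightarrow> bool" where
  "transitive_action X \<beta> \<tau> \<longleftrightarrow> X \<noteq> {} \<and>
     (\<forall>x\<in>X. \<forall>y\<in>X. \<exists>g\<in>gmaps X \<beta> \<tau>. g x = y)"

definition primitive_action :: "'a set \<Rightarrow> ('a \<Rightarrow> 'a) \<Rightarrow> ('a \<Rightarrow> 'a) \<Rightarrow> bool" where
  "primitive_action X \<beta> \<tau> \<longleftrightarrow>
     (\<forall>R. equiv X R \<and> (\<forall>g\<in>gmaps X \<beta> \<tau>. \<forall>(x,y)\<in>R. (g x, g y) \<in> R)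
          \<longrightarrow> R = Id_on X \<or> R = X \<times> X)"

definition highly_transitive_action :: "'a set \<Rightarrow> ('a \<Rightarrow> 'a) \<Rightarrow> ('a \<Rightarrow> 'a) \<Rightarrow> bool" where
  "highly_transitive_action X \<beta> \<tau> \<longleftrightarrow>
     (\<forall>d::nat. \<forall>xs ys. length xs = d \<and> length ys = d \<and> distinct xs \<and> distinct ys \<and>
        set xs \<subseteq> X \<and> set ys \<subseteq> X \<longrightarrow> (\<exists>g\<in>gmaps X \<beta> \<tau>. map g xs = ys))"

text \<open>[<b> : <b> \<inter> Stab(x0)]: the subgroup {k. b^k \<in> Stab(x0)} of Z (b has infinite order
  in BS(m,n)); its index is its least positive element, or infinity if it is trivial.\<close>
definition b_index :: "'a set \<Rightarrow> ('a \<Rightarrow> 'a) \<Rightarrow> 'a \<Rightarrow> enat" where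
  "b_index X \<beta> x0 =
     (let H = {k::int. zpw X \<beta> k x0 = x0} in
      if \<exists>k\<in>H. k \<noteq> 0 then enat (nat (LEAST k. k > 0 \<and> k \<in> H)) else \<infinity>)"

definition Ph :: "int \<Rightarrow> int \<Rightarrow> enat \<Rightarrow> enat" where
  "Ph m n L = (case L of \<infinity> \<Rightarrow> \<infinity>
     | enat l \<Rightarrow> enat (\<Prod>p\<in>{p::nat. prime p \<and> multiplicity (int p) m = multiplicity (int p) n
                                 \<and> multiplicity p l > multiplicity (int p) n}.
                        p ^ multiplicity p l))"

definition phenotype :: "int \<Rightarrow> int \<Rightarrow> 'a set \<Rightarrow> ('a \<Rightarrow> 'a) \<Rightarrow> 'a \<Rightarrow> enat" where
  "phenotype m n X \<beta> x0 = Ph m n (b_index X \<beta> x0)"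

text \<open>(m,n)-phenotype: value of the phenotype of some transitive action (BS(m,n) is countable,
  so transitive actions live on countable sets, here realised inside nat).\<close>
definition is_phenotype :: "int \<Rightarrow> int \<Rightarrow> enat \<Rightarrow> bool" where
  "is_phenotype m n q \<longleftrightarrow> (\<exists>(X::nat set) \<beta> \<tau> x0. BS_action m n X \<beta> \<tau> \<and>
      transitive_action X \<beta> \<tau> \<and> x0 \<in> X \<and> phenotype m n X \<beta> x0 = q)"

end

theory Submission
  imports Defs
begin

lemma inv_facts:
  assumes "bij_betw f X X" "x \<in> X"
  shows "inv_into X f x \<in> X" "f (inv_into X f x) = x" "inv_into X f (f x) = x" "f x \<in> X"
  using assms by (auto simp: bij_betw_def inv_into_into f_inv_into_f)

lemma funpow_in: "bij_betw f X X \<Longrightarrow> x \<in> X \<Longrightarrow> (f ^^ i) x \<in> X"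
  by (induction i) (auto simp: bij_betw_def)

lemma zpw_in: assumes "bij_betw f X X" "x \<in> X" shows "zpw X f k x \<in> X"
proof -
  have "bij_betw (inv_into X f) X X" using assms(1) by (rule bij_betw_inv_into)
  thus ?thesis using assms funpow_in by (auto simp: zpw_def)
qed

lemma zpw_succ:
  assumes b: "bij_betw f X X" and x: "x \<in> X"
  shows "zpw X f (k+1) x = f (zpw X f k x)"
proof -
  have bi: "bij_betw (inv_into X f) X X" using b by (rule bij_betw_inv_into)
  consider "k \<ge> 0" | "k = -1" | "k < -1" by linarith
  then show ?thesis
  proof cases
    case 1
    then have "nat (k+1) = Suc (nat k)" by simp
    then show ?thesis using 1 by (simp add: zpw_def)
  next
    case 2 then show ?thesis using inv_facts[OF b x] by (simp add: zpw_def)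
  next
    case 3
    then have "nat (-k) = Suc (nat (-(k+1)))" by simp
    then have "zpw X f k x = inv_into X f (zpw X f (k+1) x)" using 3 by (simp add: zpw_def)
    moreover have "zpw X f (k+1) x \<in> X" by (rule zpw_in[OF b x])
    ultimately show ?thesis using inv_facts[OF b] by simp
  qed
qed

lemma zpw_pred:
  assumes b: "bij_betw f X X" and x: "x \<in> X"
  shows "zpw X f (k-1) x = inv_into X f (zpw X f k x)"
  using zpw_succ[OF b x, of "k-1"] inv_facts(3)[OF b zpw_in[OF b x, of "k-1"]] by simp

lemma zpw_add:
  assumes b: "bij_betw f X X" and x: "x \<in> X"
  shows "zpw X f a (zpw X f c x) = zpw X f (a + c) x"
proof (induction a rule: int_induct[where k=0])
  case base
  then show ?case by (simp add: zpw_def)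
next
  case (step1 i)
  then show ?case using zpw_succ[OF b x, of "i+c"] zpw_succ[OF b zpw_in[OF b x], of i]
    by (simp add: algebra_simps)
next
  case (step2 i)
  then show ?case using zpw_pred[OF b x, of "i+c"] zpw_pred[OF b zpw_in[OF b x], of i]
    by (simp add: algebra_simps)
qed

lemma zpw_0 [simp]: "zpw X f 0 x = x" by (simp add: zpw_def)
lemma zpw_1: "zpw X f 1 x = f x" by (simp add: zpw_def)
lemma zpw_m1: "zpw X f (-1) x = inv_into X f x" by (simp add: zpw_def)

lemma zpw_cancel:
  assumes b: "bij_betw f X X" and x: "x \<in> X"
  shows "zpw X f k (zpw X f c x) = zpw X f c x \<longleftrightarrow> zpw X f k x = x"
proof
  assume "zpw X f k (zpw X f c x) = zpw X f c x"
  then have "zpw X f (-c) (zpw X f k (zpw X f c x)) = zpw X f (-c) (zpw X f c x)" by simp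
  then show "zpw X f k x = x" using zpw_add[OF b x] zpw_add[OF b zpw_in[OF b x]] by simp
next
  assume "zpw X f k x = x"
  then show "zpw X f k (zpw X f c x) = zpw X f c x" using zpw_add[OF b x, of k c] zpw_add[OF b x, of c k]
    by (simp add: add.commute)
qed

lemma zpw_eq_iff:
  assumes b: "bij_betw f X X" and x: "x \<in> X"
  shows "zpw X f a x = zpw X f c x \<longleftrightarrow> zpw X f (a - c) x = x"
  using zpw_cancel[OF b x, of "a-c" c] zpw_add[OF b x, of "a-c" c] by simp


lemma rel1:
  assumes A: "BS_action m n X \<beta> \<tau>" and y: "y \<in> X"
  shows "zpw X \<beta> m (\<tau> y) = \<tau> (zpw X \<beta> n y)"
proof -
  have b: "bij_betw \<beta> X X" and t: "bij_betw \<tau> X X" and r: "inv_into X \<tau> (zpw X \<beta> m (\<tau> y)) = zpw X \<beta> n y"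
    using A y by (auto simp: BS_action_def)
  have "\<tau> y \<in> X" using inv_facts[OF t y] by simp
  then have "zpw X \<beta> m (\<tau> y) \<in> X" using zpw_in[OF b] by blast
  then show ?thesis using r inv_facts(2)[OF t] by metis
qed

lemma relj:
  assumes A: "BS_action m n X \<beta> \<tau>" and y: "y \<in> X"
  shows "zpw X \<beta> (m*j) (\<tau> y) = \<tau> (zpw X \<beta> (n*j) y)"
proof -
  have b: "bij_betw \<beta> X X" and t: "bij_betw \<tau> X X" using A by (auto simp: BS_action_def)
  have ty: "\<tau> y \<in> X" using inv_facts[OF t y] by simp
  show ?thesis
  proof (induction j rule: int_induct[where k=0])
    case base then show ?case by simp
  next
    case (step1 i)
    have "zpw X \<beta> (m*(i+1)) (\<tau> y) = zpw X \<beta> m (zpw X \<beta> (m*i) (\<tau> y))"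
      using zpw_add[OF b ty, of m "m*i"] by (simp add: algebra_simps)
    also have "\<dots> = zpw X \<beta> m (\<tau> (zpw X \<beta> (n*i) y))" using step1 by simp
    also have "\<dots> = \<tau> (zpw X \<beta> n (zpw X \<beta> (n*i) y))" using rel1[OF A zpw_in[OF b y]] by simp
    also have "\<dots> = \<tau> (zpw X \<beta> (n*(i+1)) y)" using zpw_add[OF b y, of n "n*i"] by (simp add: algebra_simps)
    finally show ?case .
  next
    case (step2 i)
    define w where "w = zpw X \<beta> (n*(i-1)) y"
    have w: "w \<in> X" unfolding w_def using zpw_in[OF b y] .
    have tw: "\<tau> w \<in> X" using inv_facts[OF t w] by simp
    have "\<tau> (zpw X \<beta> (n*i) y) = \<tau> (zpw X \<beta> n w)"
      unfolding w_def using zpw_add[OF b y, of n "n*(i-1)"] by (simp add: algebra_simps)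
    also have "\<dots> = zpw X \<beta> m (\<tau> w)" using rel1[OF A w] by simp
    finally have e: "zpw X \<beta> (m*i) (\<tau> y) = zpw X \<beta> m (\<tau> w)" using step2 by simp
    have "zpw X \<beta> (m*(i-1)) (\<tau> y) = zpw X \<beta> (-m) (zpw X \<beta> (m*i) (\<tau> y))"
      using zpw_add[OF b ty, of "-m" "m*i"] by (simp add: algebra_simps)
    also have "\<dots> = \<tau> w" using e zpw_add[OF b tw, of "-m" m] by simp
    finally show ?case unfolding w_def .
  qed
qed

lemma per_exists:
  assumes b: "bij_betw f X X" and x: "x \<in> X" and k: "zpw X f k x = x" "k \<noteq> 0"
  shows "\<exists>L>0. \<forall>i. zpw X f i x = x \<longleftrightarrow> L dvd i"
proof -
  have kk: "zpw X f \<bar>k\<bar> x = x"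
  proof (cases "k \<ge> 0")
    case False
    then have "zpw X f (-k) (zpw X f k x) = zpw X f (-k) x" using k by simp
    then show ?thesis using False zpw_add[OF b x, of "-k" k] by simp
  qed (use k in simp)
  define N where "N = (LEAST i::nat. i > 0 \<and> zpw X f (int i) x = x)"
  define L where "L = int N"
  have ex: "\<exists>i::nat. i > 0 \<and> zpw X f (int i) x = x" using kk k by (intro exI[of _ "nat \<bar>k\<bar>"]) simp
  have L: "L > 0 \<and> zpw X f L x = x" unfolding L_def N_def
    using LeastI_ex[of "\<lambda>i::nat. i > 0 \<and> zpw X f (int i) x = x"] ex by simp
  have Lmin: "\<And>i. 0 < i \<Longrightarrow> i < L \<Longrightarrow> zpw X f i x \<noteq> x"
  proof -
    fix i :: int assume i: "0 < i" "i < L"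
    show "zpw X f i x \<noteq> x"
    proof
      assume "zpw X f i x = x"
      then have "N \<le> nat i" unfolding N_def using i(1)
        by (intro Least_le) auto
      then show False using i L_def by simp
    qed
  qed
  have mult: "\<And>j. zpw X f (L*j) x = x"
  proof -
    fix j
    show "zpw X f (L*j) x = x"
    proof (induction j rule: int_induct[where k=0])
      case base then show ?case by simp
    next
      case (step1 i)
      then show ?case using zpw_add[OF b x, of L "L*i"] L by (simp add: algebra_simps)
    next
      case (step2 i)
      have "zpw X f (-L) x = x" using zpw_cancel[OF b x, of "-L" L] zpw_add[OF b x, of "-L" L] L by simp
      then show ?case using step2 zpw_add[OF b x, of "-L" "L*i"] by (simp add: algebra_simps)
    qed
  qed
  have "\<forall>i. zpw X f i x = x \<longleftrightarrow> L dvd i"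
  proof (intro allI iffI)
    fix i assume h: "zpw X f i x = x"
    have "zpw X f (i mod L) x = x"
      using h mult[of "-(i div L)"] zpw_add[OF b x, of "L*(-(i div L))" i]
      by (metis add.commute minus_div_mult_eq_mod mult.commute mult_minus_left uminus_add_conv_diff)
    moreover have "0 \<le> i mod L" "i mod L < L" using L by auto
    ultimately have "i mod L = 0" using Lmin by force
    then show "L dvd i" by auto
  next
    fix i assume "L dvd i" then show "zpw X f i x = x" using mult by auto
  qed
  then show ?thesis using L by blast
qed


lemma arith_j:
  fixes P L c k :: int
  assumes P: "prime P" and L: "L > 0" and c: "c \<noteq> 0"
    and v: "multiplicity P L > multiplicity P c" and d: "L dvd P * k"
  shows "\<exists>j. L dvd k - c * j"
proof (cases "k = 0")
  case True then show ?thesis by (intro exI[of _ 0]) simp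
next
  case kF: False
  define g where "g = gcd L c"
  have g0: "g \<noteq> 0" using L unfolding g_def by simp
  have Pk: "P * k \<noteq> 0" using kF P by auto
  have "g dvd k"
  proof (rule multiplicity_le_imp_dvd[OF g0])
    fix r :: int assume r: "prime r"
    show "multiplicity r g \<le> multiplicity r k"
    proof (cases "r = P")
      case True
      have "multiplicity r g \<le> multiplicity r c" unfolding g_def by (rule dvd_imp_multiplicity_le[OF _ c]) simp
      moreover have "multiplicity r L \<le> multiplicity r (P*k)" by (rule dvd_imp_multiplicity_le[OF d Pk])
      moreover have "multiplicity P (P*k) = Suc (multiplicity P k)"
        using P kF by (intro multiplicity_times_same) auto
      ultimately show ?thesis using True v by simp
    next
      case False
      have nd: "\<not> r dvd P" using False r P primes_dvd_imp_eq by blast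
      have "multiplicity r g \<le> multiplicity r L" unfolding g_def by (rule dvd_imp_multiplicity_le) (use L in auto)
      also have "\<dots> \<le> multiplicity r (P*k)" by (rule dvd_imp_multiplicity_le[OF d Pk])
      also have "\<dots> = multiplicity r P + multiplicity r k"
        using r P \<open>k \<noteq> 0\<close> by (intro prime_elem_multiplicity_mult_distrib) auto
      also have "multiplicity r P = 0" using nd by (rule not_dvd_imp_multiplicity_0)
      finally show ?thesis by simp
    qed
  qed
  then obtain t where t: "k = g * t" by auto
  obtain u w where uw: "u * L + w * c = g" using bezout_int[of L c] unfolding g_def by blast
  have "k - c * (w*t) = L * (u*t)" unfolding t uw[symmetric] by (simp add: algebra_simps)
  then show ?thesis by (intro exI[of _ "w*t"]) simp
qed

lemma val_prop:
  fixes P A B a b :: int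
  assumes P: "prime P" and A: "A \<noteq> 0" and B: "B \<noteq> 0" and a: "a \<noteq> 0" and b: "b \<noteq> 0"
    and e: "multiplicity P a = multiplicity P b"
    and rel: "\<And>j. B dvd b * j \<longleftrightarrow> A dvd a * j"
    and v: "multiplicity P A > multiplicity P a"
  shows "multiplicity P B > multiplicity P b"
proof (rule ccontr)
  assume "\<not> ?thesis"
  then have le: "multiplicity P B \<le> multiplicity P b" by simp
  obtain w where w: "B = P ^ multiplicity P B * w" "\<not> P dvd w"
    using multiplicity_decompose'[of B P] B P not_prime_unit by blast
  have "P ^ multiplicity P B dvd b" using le by (rule multiplicity_dvd')
  then obtain b' where b': "b = P ^ multiplicity P B * b'" by auto
  have "b * w = B * b'" using w b' by (simp add: algebra_simps)
  then have "B dvd b * w" by simp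
  then have Ad: "A dvd a * w" using rel by simp
  have w0: "w \<noteq> 0" using w B by auto
  have "multiplicity P (a*w) = multiplicity P a + multiplicity P w"
    using P a w0 by (intro prime_elem_multiplicity_mult_distrib) auto
  also have "multiplicity P w = 0" using w(2) by (rule not_dvd_imp_multiplicity_0)
  finally have "multiplicity P A \<le> multiplicity P a"
    using dvd_imp_multiplicity_le[OF Ad, of P] a w0 by simp
  then show False using v by simp
qed


definition goodpt :: "'a set \<Rightarrow> ('a\<Rightarrow>'a) \<Rightarrow> int \<Rightarrow> nat \<Rightarrow> 'a \<Rightarrow> bool" where
  "goodpt X f P e x \<longleftrightarrow> (\<exists>L>0. (\<forall>i. zpw X f i x = x \<longleftrightarrow> L dvd i) \<and> multiplicity P L > e)"

definition Rel :: "'a set \<Rightarrow> ('a\<Rightarrow>'a) \<Rightarrow> int \<Rightarrow> ('a \<times> 'a) set" where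
  "Rel X f P = {(x,y). x \<in> X \<and> (\<exists>k. zpw X f (P*k) x = x \<and> y = zpw X f k x)}"

lemma good_zpw:
  assumes b: "bij_betw f X X" and x: "x \<in> X" and g: "goodpt X f P e x"
  shows "goodpt X f P e (zpw X f c x)"
  using g zpw_cancel[OF b x] unfolding goodpt_def by simp

lemma BS_bij: assumes "BS_action m n X \<beta> \<tau>" shows "bij_betw \<beta> X X" "bij_betw \<tau> X X"
  using assms by (auto simp: BS_action_def)

lemma tau_iff:
  assumes A: "BS_action m n X \<beta> \<tau>" and x: "x \<in> X"
  shows "zpw X \<beta> (m*j) (\<tau> x) = \<tau> x \<longleftrightarrow> zpw X \<beta> (n*j) x = x"
proof -
  have "inj_on \<tau> X" using BS_bij(2)[OF A] by (simp add: bij_betw_def)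
  then show ?thesis using relj[OF A x, of j] zpw_in[OF BS_bij(1)[OF A] x] x
    by (metis inj_on_eq_iff)
qed

lemma good_tau:
  assumes A: "BS_action m n X \<beta> \<tau>" and x: "x \<in> X" and P: "prime P" and m: "m \<noteq> 0" and n: "n \<noteq> 0"
    and e: "multiplicity P m = multiplicity P n" and g: "goodpt X \<beta> P (multiplicity P n) x"
  shows "goodpt X \<beta> P (multiplicity P n) (\<tau> x)"
proof -
  have b: "bij_betw \<beta> X X" and t: "bij_betw \<tau> X X" using BS_bij[OF A] by auto
  have tx: "\<tau> x \<in> X" using inv_facts(4)[OF t x] .
  obtain L where L: "L > 0" "\<And>i. zpw X \<beta> i x = x \<longleftrightarrow> L dvd i" "multiplicity P L > multiplicity P n"
    using g unfolding goodpt_def by blast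
  have "zpw X \<beta> (m*L) (\<tau> x) = \<tau> x" using tau_iff[OF A x] L(2) by simp
  then obtain L' where L': "L' > 0" "\<And>i. zpw X \<beta> i (\<tau> x) = \<tau> x \<longleftrightarrow> L' dvd i"
    using per_exists[OF b tx] m L(1) by (metis mult_eq_0_iff order_less_irrefl)
  have rel: "\<And>j. L' dvd m * j \<longleftrightarrow> L dvd n * j" using tau_iff[OF A x] L(2) L'(2) by simp
  have "multiplicity P L' > multiplicity P m"
    by (rule val_prop[OF P _ _ n m e[symmetric] rel L(3)]) (use L L' in auto)
  then show ?thesis unfolding goodpt_def using L' e by auto
qed

lemma good_tauinv:
  assumes A: "BS_action m n X \<beta> \<tau>" and x: "x \<in> X" and P: "prime P" and m: "m \<noteq> 0" and n: "n \<noteq> 0"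
    and e: "multiplicity P m = multiplicity P n" and g: "goodpt X \<beta> P (multiplicity P n) x"
  shows "goodpt X \<beta> P (multiplicity P n) (inv_into X \<tau> x)"
proof -
  have b: "bij_betw \<beta> X X" and t: "bij_betw \<tau> X X" using BS_bij[OF A] by auto
  define x' where "x' = inv_into X \<tau> x"
  have x': "x' \<in> X" "\<tau> x' = x" unfolding x'_def using inv_facts[OF t x] by auto
  obtain L where L: "L > 0" "\<And>i. zpw X \<beta> i x = x \<longleftrightarrow> L dvd i" "multiplicity P L > multiplicity P n"
    using g unfolding goodpt_def by blast
  have "zpw X \<beta> (n*L) x' = x'" using tau_iff[OF A x'(1), of L] L(2) x'(2) by simp
  then obtain L' where L': "L' > 0" "\<And>i. zpw X \<beta> i x' = x' \<longleftrightarrow> L' dvd i"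
    using per_exists[OF b x'(1)] n L(1) by (metis mult_eq_0_iff order_less_irrefl)
  have rel: "\<And>j. L' dvd n * j \<longleftrightarrow> L dvd m * j" using tau_iff[OF A x'(1)] L(2) L'(2) x'(2) by simp
  have "multiplicity P L' > multiplicity P n"
    by (rule val_prop[OF P _ _ m n e rel]) (use L L' e in auto)
  then show ?thesis unfolding goodpt_def x'_def[symmetric] using L' by auto
qed


lemma Rel_equiv:
  assumes b: "bij_betw f X X"
  shows "equiv X (Rel X f P)"
proof (rule equivI)
  show "Rel X f P \<subseteq> X \<times> X"
  proof
    fix z assume "z \<in> Rel X f P"
    then obtain x y k where "z = (x,y)" "x \<in> X" "y = zpw X f k x" unfolding Rel_def by auto
    then show "z \<in> X \<times> X" using zpw_in[OF b] by auto
  qed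
  show "refl_on X (Rel X f P)"
  proof (rule refl_onI)
    fix x assume "x \<in> X"
    then show "(x,x) \<in> Rel X f P" unfolding Rel_def by (auto intro!: exI[of _ 0])
  qed
  show "sym (Rel X f P)"
  proof (rule symI)
    fix x y assume "(x,y) \<in> Rel X f P"
    then obtain k where x: "x \<in> X" and k: "zpw X f (P*k) x = x" "y = zpw X f k x" unfolding Rel_def by auto
    have e1: "zpw X f (P*(-k)) (zpw X f (P*k) x) = zpw X f (P*(-k) + P*k) x" by (rule zpw_add[OF b x])
    have "zpw X f (P*(-k)) x = x" using e1 k(1) by simp
    then have "zpw X f (P*(-k)) y = y" unfolding k(2) using zpw_cancel[OF b x, of "P*(-k)" k] by blast
    moreover have "zpw X f (-k) y = x" unfolding k(2) using zpw_add[OF b x, of "-k" k] by simp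
    moreover have "y \<in> X" unfolding k(2) by (rule zpw_in[OF b x])
    ultimately show "(y,x) \<in> Rel X f P" unfolding Rel_def by blast
  qed
  show "trans (Rel X f P)"
  proof (rule transI)
    fix x y z assume "(x,y) \<in> Rel X f P" "(y,z) \<in> Rel X f P"
    then obtain k k' where x: "x \<in> X" and k: "zpw X f (P*k) x = x" "y = zpw X f k x"
      and k': "zpw X f (P*k') y = y" "z = zpw X f k' y" unfolding Rel_def by auto
    have k'x: "zpw X f (P*k') x = x" using k'(1) unfolding k(2) using zpw_cancel[OF b x, of "P*k'" k] by blast
    have "zpw X f (P*k' + P*k) x = x"
      using zpw_add[OF b x, of "P*k'" "P*k"] k(1) k'x by simp
    then have "zpw X f (P*(k'+k)) x = x" by (simp add: distrib_left)
    moreover have "z = zpw X f (k'+k) x" using k'(2) unfolding k(2) using zpw_add[OF b x, of k' k] by simp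
    ultimately show "(x,z) \<in> Rel X f P" unfolding Rel_def using x by blast
  qed
qed

lemma Rel_zpw:
  assumes b: "bij_betw f X X" and r: "(x,y) \<in> Rel X f P"
  shows "(zpw X f c x, zpw X f c y) \<in> Rel X f P"
proof -
  obtain k where x: "x \<in> X" and k: "zpw X f (P*k) x = x" "y = zpw X f k x" using r unfolding Rel_def by auto
  have "zpw X f c y = zpw X f k (zpw X f c x)"
    unfolding k(2) using zpw_add[OF b x, of c k] zpw_add[OF b x, of k c] by (simp add: add.commute)
  moreover have "zpw X f (P*k) (zpw X f c x) = zpw X f c x" using zpw_cancel[OF b x, of "P*k" c] k(1) by blast
  moreover have "zpw X f c x \<in> X" by (rule zpw_in[OF b x])
  ultimately show ?thesis unfolding Rel_def by blast
qed

lemma Rel_tau: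
  assumes A: "BS_action m n X \<beta> \<tau>" and P: "prime P" and m: "m \<noteq> 0" and n: "n \<noteq> 0"
    and e: "multiplicity P m = multiplicity P n" and g: "\<forall>x\<in>X. goodpt X \<beta> P (multiplicity P n) x"
    and r: "(x,y) \<in> Rel X \<beta> P"
  shows "(\<tau> x, \<tau> y) \<in> Rel X \<beta> P" "(inv_into X \<tau> x, inv_into X \<tau> y) \<in> Rel X \<beta> P"
proof -
  have b: "bij_betw \<beta> X X" and t: "bij_betw \<tau> X X" using BS_bij[OF A] by auto
  obtain k where x: "x \<in> X" and k: "zpw X \<beta> (P*k) x = x" "y = zpw X \<beta> k x" using r unfolding Rel_def by auto
  obtain L where L: "L > 0" "\<And>i. zpw X \<beta> i x = x \<longleftrightarrow> L dvd i" "multiplicity P L > multiplicity P n"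
    using g x unfolding goodpt_def by blast
  have Lk: "L dvd P * k" using L(2) k(1) by simp
  obtain j where j: "L dvd k - n * j" using arith_j[OF P L(1) n L(3) Lk] by blast
  have "y = zpw X \<beta> (n*j) x" using k(2) zpw_eq_iff[OF b x] L(2) j by simp
  then have ty: "\<tau> y = zpw X \<beta> (m*j) (\<tau> x)" using relj[OF A x] by simp
  have "L dvd P * (k - n*j)" using j by simp
  then have "L dvd P * k - P * (k - n*j)" using Lk by (rule dvd_diff[rotated])
  moreover have "P * k - P * (k - n*j) = n * (P * j)" by (simp add: algebra_simps)
  ultimately have "L dvd n * (P * j)" by simp
  then have "zpw X \<beta> (m*(P*j)) (\<tau> x) = \<tau> x" using tau_iff[OF A x] L(2) by simp
  then show "(\<tau> x, \<tau> y) \<in> Rel X \<beta> P" unfolding Rel_def using ty inv_facts(4)[OF t x]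
    by (auto intro!: exI[of _ "m*j"] simp: mult.left_commute)
  define x' where "x' = inv_into X \<tau> x"
  have x': "x' \<in> X" "\<tau> x' = x" unfolding x'_def using inv_facts[OF t x] by auto
  obtain j where j: "L dvd k - m * j" using arith_j[OF P L(1) m _ Lk] L(3) e by auto
  have "y = zpw X \<beta> (m*j) x" using k(2) zpw_eq_iff[OF b x] L(2) j by simp
  then have "y = \<tau> (zpw X \<beta> (n*j) x')" using relj[OF A x'(1)] x'(2) by simp
  then have ty: "inv_into X \<tau> y = zpw X \<beta> (n*j) x'" using inv_facts(3)[OF t zpw_in[OF b x'(1)]] by simp
  have "L dvd P * (k - m*j)" using j by simp
  then have "L dvd P * k - P * (k - m*j)" using Lk by (rule dvd_diff[rotated])
  moreover have "P * k - P * (k - m*j) = m * (P * j)" by (simp add: algebra_simps)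
  ultimately have "L dvd m * (P * j)" by simp
  then have "zpw X \<beta> (n*(P*j)) x' = x'" using tau_iff[OF A x'(1)] L(2) x'(2) by simp
  then show "(inv_into X \<tau> x, inv_into X \<tau> y) \<in> Rel X \<beta> P" unfolding Rel_def using ty x'
    by (auto intro!: exI[of _ "n*j"] simp: mult.left_commute x'_def)
qed


lemma mult_int:
  fixes p l :: nat
  assumes p: "prime p" and l: "l > 0"
  shows "multiplicity (int p) (int l) = multiplicity p l"
proof -
  define k where "k = multiplicity p l"
  have "p ^ k dvd l" unfolding k_def by (rule multiplicity_dvd)
  then have d1: "int p ^ k dvd int l" by (metis of_nat_dvd_iff of_nat_power)
  have "\<not> p ^ Suc k dvd l"
  proof
    assume "p ^ Suc k dvd l"
    then have "multiplicity p l \<ge> Suc k" using multiplicity_geI[where p=p and n="Suc k" and x=l] l p not_prime_unit by auto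
    then show False unfolding k_def by simp
  qed
  then have d2: "\<not> int p ^ Suc k dvd int l" by (metis of_nat_dvd_iff of_nat_power)
  have "multiplicity (int p) (int l) = k"
    using d1 d2 l p by (intro multiplicity_eqI) (auto simp: prime_int_iff)
  then show ?thesis unfolding k_def .
qed

lemma gm_props:
  assumes A: "BS_action m n X \<beta> \<tau>" and g: "g \<in> gmaps X \<beta> \<tau>"
  shows "\<forall>x\<in>X. g x \<in> X"
  using g
proof induction
  case gm_id then show ?case by simp
next
  case (gm_b g) then show ?case using inv_facts[OF BS_bij(1)[OF A]] by auto
next
  case (gm_t g) then show ?case using inv_facts[OF BS_bij(2)[OF A]] by auto
next
  case (gm_bi g) then show ?case using inv_facts[OF BS_bij(1)[OF A]] by auto
next
  case (gm_ti g) then show ?case using inv_facts[OF BS_bij(2)[OF A]] by auto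
qed

lemma gm_good:
  assumes A: "BS_action m n X \<beta> \<tau>" and P: "prime P" and m: "m \<noteq> 0" and n: "n \<noteq> 0"
    and e: "multiplicity P m = multiplicity P n" and g: "g \<in> gmaps X \<beta> \<tau>"
    and x: "x \<in> X" and gx: "goodpt X \<beta> P (multiplicity P n) x"
  shows "goodpt X \<beta> P (multiplicity P n) (g x)"
  using g
proof induction
  case gm_id then show ?case using gx by simp
next
  case (gm_b g)
  have "g x \<in> X" using gm_props[OF A gm_b(1)] x by blast
  then show ?case using good_zpw[OF BS_bij(1)[OF A] _ gm_b(2), of 1] by (simp add: zpw_1)
next
  case (gm_bi g)
  have "g x \<in> X" using gm_props[OF A gm_bi(1)] x by blast
  then show ?case using good_zpw[OF BS_bij(1)[OF A] _ gm_bi(2), of "-1"] by (simp add: zpw_m1)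
next
  case (gm_t g)
  have "g x \<in> X" using gm_props[OF A gm_t(1)] x by blast
  then show ?case using good_tau[OF A _ P m n e gm_t(2)] by simp
next
  case (gm_ti g)
  have "g x \<in> X" using gm_props[OF A gm_ti(1)] x by blast
  then show ?case using good_tauinv[OF A _ P m n e gm_ti(2)] by simp
qed

lemma gm_rel:
  assumes A: "BS_action m n X \<beta> \<tau>" and P: "prime P" and m: "m \<noteq> 0" and n: "n \<noteq> 0"
    and e: "multiplicity P m = multiplicity P n" and G: "\<forall>x\<in>X. goodpt X \<beta> P (multiplicity P n) x"
    and g: "g \<in> gmaps X \<beta> \<tau>" and r: "(x,y) \<in> Rel X \<beta> P"
  shows "(g x, g y) \<in> Rel X \<beta> P"
  using g
proof induction
  case gm_id then show ?case using r by simp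
next
  case (gm_b g) then show ?case using Rel_zpw[OF BS_bij(1)[OF A] gm_b(2), of 1] by (simp add: zpw_1)
next
  case (gm_bi g) then show ?case using Rel_zpw[OF BS_bij(1)[OF A] gm_bi(2), of "-1"] by (simp add: zpw_m1)
next
  case (gm_t g) then show ?case using Rel_tau(1)[OF A P m n e G gm_t(2)] by simp
next
  case (gm_ti g) then show ?case using Rel_tau(2)[OF A P m n e G gm_ti(2)] by simp
qed


theorem mainTheorem14:
  fixes m n :: int and q :: enat and X :: "'a set" and \<beta> \<tau> :: "'a \<Rightarrow> 'a" and x0 :: 'a
  assumes "m \<noteq> 0" and "n \<noteq> 0"
    and "is_phenotype m n q" and "q \<noteq> 1" and "q \<noteq> \<infinity>"
    and "BS_action m n X \<beta> \<tau>" and "transitive_action X \<beta> \<tau>" and "infinite X"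
    and "x0 \<in> X" and "phenotype m n X \<beta> x0 = q"
  shows "\<not> primitive_action X \<beta> \<tau> \<and> \<not> highly_transitive_action X \<beta> \<tau>"
proof -
  note m = assms(1) and n = assms(2) and A = assms(6) and tr = assms(7) and inf = assms(8)
    and x0 = assms(9)
  have b: "bij_betw \<beta> X X" and t: "bij_betw \<tau> X X" using BS_bij[OF A] by auto
  have bi: "b_index X \<beta> x0 \<noteq> \<infinity>"
  proof
    assume "b_index X \<beta> x0 = \<infinity>"
    then have "q = \<infinity>" using assms(10) by (simp add: phenotype_def Ph_def)
    then show False using assms(5) by simp
  qed
  then obtain k where k: "zpw X \<beta> k x0 = x0" "k \<noteq> 0"
    unfolding b_index_def Let_def by (auto split: if_splits)
  obtain L where L: "L > 0" "\<And>i. zpw X \<beta> i x0 = x0 \<longleftrightarrow> L dvd i"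
    using per_exists[OF b x0 k] by blast
  have least: "(LEAST i. i > 0 \<and> i \<in> {k. zpw X \<beta> k x0 = x0}) = L"
  proof (rule Least_equality)
    show "L > 0 \<and> L \<in> {k. zpw X \<beta> k x0 = x0}" using L by simp
    fix y assume "y > 0 \<and> y \<in> {k. zpw X \<beta> k x0 = x0}"
    then show "L \<le> y" using L(2) by (auto intro: zdvd_imp_le)
  qed
  have "b_index X \<beta> x0 = enat (nat L)"
    unfolding b_index_def Let_def least using k by auto
  then have q: "q = enat (\<Prod>p\<in>{p::nat. prime p \<and> multiplicity (int p) m = multiplicity (int p) n
                                 \<and> multiplicity p (nat L) > multiplicity (int p) n}. p ^ multiplicity p (nat L))"
    using assms(10) by (simp add: phenotype_def Ph_def)
  obtain p :: nat where p: "prime p" "multiplicity (int p) m = multiplicity (int p) n"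
     "multiplicity p (nat L) > multiplicity (int p) n"
  proof (rule ccontr)
    assume "\<not> thesis"
    then have "{p::nat. prime p \<and> multiplicity (int p) m = multiplicity (int p) n
                                 \<and> multiplicity p (nat L) > multiplicity (int p) n} = {}" (is "?S = {}") using that by blast
    then have "q = 1" using q by (metis prod.empty one_enat_def)
    then show False using assms(4) by simp
  qed
  define P where "P = int p"
  have P: "prime P" using p(1) unfolding P_def by simp
  have e: "multiplicity P m = multiplicity P n" using p(2) unfolding P_def .
  have mL: "multiplicity P L = multiplicity p (nat L)"
    unfolding P_def using mult_int[OF p(1), of "nat L"] L(1) by simp
  have vL: "multiplicity P L > multiplicity P n" using p(3) mL unfolding P_def by simp
  have g0: "goodpt X \<beta> P (multiplicity P n) x0" unfolding goodpt_def using L vL by blast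
  have G: "\<forall>x\<in>X. goodpt X \<beta> P (multiplicity P n) x"
  proof
    fix x assume "x \<in> X"
    then obtain g where "g \<in> gmaps X \<beta> \<tau>" "g x0 = x" using tr x0 unfolding transitive_action_def by blast
    then show "goodpt X \<beta> P (multiplicity P n) x" using gm_good[OF A P m n e _ x0 g0] by blast
  qed
  define R where "R = Rel X \<beta> P"
  have eqR: "equiv X R" unfolding R_def by (rule Rel_equiv[OF b])
  have invR: "\<forall>g\<in>gmaps X \<beta> \<tau>. \<forall>(x,y)\<in>R. (g x, g y) \<in> R"
    unfolding R_def using gm_rel[OF A P m n e G] by blast
  have "multiplicity P L \<ge> 1" using vL by simp
  then have "P ^ 1 dvd L" by (rule multiplicity_dvd')
  then obtain L1 where L1: "L = P * L1" by auto
  have P2: "P \<ge> 2" using P by (simp add: prime_ge_2_int)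
  have L1pos: "L1 > 0" using L(1) L1 P2 by (simp add: zero_less_mult_iff)
  have L1lt: "L1 < L" using L1 L1pos P2 by (simp add: mult_less_cancel_right1)  
  define y0 where "y0 = zpw X \<beta> L1 x0"
  have y0R: "(x0, y0) \<in> R" unfolding R_def Rel_def y0_def using x0 L(2)[of "P*L1"] L1 by auto
  have y0ne: "y0 \<noteq> x0"
  proof
    assume "y0 = x0"
    then have "L dvd L1" using L(2) unfolding y0_def by simp
    then show False using L1pos L1lt zdvd_imp_le by fastforce
  qed
  have cls: "{y. (x0,y) \<in> R} \<subseteq> (\<lambda>i. zpw X \<beta> i x0) ` {0..<L}"
  proof
    fix y assume "y \<in> {y. (x0,y) \<in> R}"
    then obtain k where k: "y = zpw X \<beta> k x0" unfolding R_def Rel_def by auto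
    have "zpw X \<beta> (k - k mod L) x0 = x0" using L(2) by (simp add: minus_mod_eq_mult_div)
    then have "y = zpw X \<beta> (k mod L) x0" using k zpw_eq_iff[OF b x0, of k "k mod L"] by simp
    moreover have "k mod L \<in> {0..<L}" using L(1) by simp
    ultimately show "y \<in> (\<lambda>i. zpw X \<beta> i x0) ` {0..<L}" by blast
  qed
  have "finite {y. (x0,y) \<in> R}" using cls by (rule finite_subset) simp
  then obtain z where z: "z \<in> X" "(x0, z) \<notin> R" using inf by (metis (no_types, lifting) finite_subset mem_Collect_eq subsetI)
  have notfull: "R \<noteq> X \<times> X" using z x0 by auto
  have notid: "R \<noteq> Id_on X" using y0R y0ne by auto
  have np: "\<not> primitive_action X \<beta> \<tau>"
    unfolding primitive_action_def using eqR invR notfull notid by blast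
  have nh: "\<not> highly_transitive_action X \<beta> \<tau>"
  proof
    assume h: "highly_transitive_action X \<beta> \<tau>"
    have zx: "z \<noteq> x0" using z eqR x0 by (auto simp: equiv_def refl_on_def)
    have y0X: "y0 \<in> X" unfolding y0_def by (rule zpw_in[OF b x0])
    obtain g where g: "g \<in> gmaps X \<beta> \<tau>" "map g [x0, y0] = [x0, z]"
    proof -
      have "length [x0,y0] = 2 \<and> length [x0,z] = 2 \<and> distinct [x0,y0] \<and> distinct [x0,z] \<and>
        set [x0,y0] \<subseteq> X \<and> set [x0,z] \<subseteq> X \<longrightarrow> (\<exists>g\<in>gmaps X \<beta> \<tau>. map g [x0,y0] = [x0,z])"
        using h unfolding highly_transitive_action_def by blast
      then show ?thesis using that y0ne zx x0 y0X z(1) by auto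
    qed
    have "(g x0, g y0) \<in> R" using invR g(1) y0R by blast
    then show False using g(2) z(2) by simp
  qed
  show ?thesis using np nh by blast
qed

end
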